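(* Let $P_0$ be a distribution with a uniformly continuous density $p_0$ on $\mathbb{R}$, with distribution function $F_0\colon[-\infty,\infty]\to[0,1]$. For $u\in[0,1]$ define $F_0^{-1}(u) := \inf\{z\in[-\infty,\infty]:F_0(z)\ge u\}$ and $J_0(u) := (p_0\circ F_0^{-1})(u)$ (with $p_0(\pm\infty):=0$). Then both $J_0$ and its least concave majorant $\hat J_0$ on $[0,1]$ are continuous, with $p_0 = J_0\circ F_0$ on $\mathbb{R}$, and $\psi_0^* := \hat J_0^{(\mathrm{R})}\circ F_0$ is decreasing and right-continuous as a function from $\mathbb{R}$ to $[-\infty,\infty]$, provided that we set $\hat J_0^{(\mathrm{R})}(1) := \lim_{u\nearrow1}\hat J_0^{(\mathrm{R})}(u)$. Moreover, $\psi_0^*(z)\in\mathbb{R}$ if and only if $z\in\mathcal{S}_0$.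
   Context: $\hat J_0^{(\mathrm{R})}$ denotes the right derivative of $\hat J_0$. $\mathcal{S}_0 := (\inf\{z:p_0(z)>0\},\sup\{z:p_0(z)>0\})$. *)

theory Defs
  imports "HOL-Analysis.Analysis"
begin

definition cdf :: "(real \<Rightarrow> real) \<Rightarrow> real \<Rightarrow> real" where
  "cdf p z = integral {..z} p"

definition cdf_ext :: "(real \<Rightarrow> real) \<Rightarrow> ereal \<Rightarrow> real" where
  "cdf_ext p z = (if z = -\<infinity> then 0 else if z = \<infinity> then 1 else cdf p (real_of_ereal z))"

definition quantile :: "(real \<Rightarrow> real) \<Rightarrow> real \<Rightarrow> ereal" where
  "quantile p u = Inf {z::ereal. cdf_ext p z \<ge> u}"

definition dens_ext :: "(real \<Rightarrow> real) \<Rightarrow> ereal \<Rightarrow> real" where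
  "dens_ext p z = (if \<bar>z\<bar> = \<infinity> then 0 else p (real_of_ereal z))"

definition Jfun :: "(real \<Rightarrow> real) \<Rightarrow> real \<Rightarrow> real" where
  "Jfun p u = dens_ext p (quantile p u)"

definition lcm01 :: "(real \<Rightarrow> real) \<Rightarrow> real \<Rightarrow> real" where
  "lcm01 J u = Inf {g u | g. concave_on {0..1} g \<and> (\<forall>v\<in>{0..1}. J v \<le> g v)}"

definition right_deriv :: "(real \<Rightarrow> real) \<Rightarrow> real \<Rightarrow> ereal" where
  "right_deriv f u = Lim (at_right u) (\<lambda>v. ereal ((f v - f u) / (v - u)))"

definition right_deriv01 :: "(real \<Rightarrow> real) \<Rightarrow> real \<Rightarrow> ereal" where
  "right_deriv01 f u = (if u < 1 then right_deriv f u
                        else Lim (at_left 1) (right_deriv f))"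

definition psi_star :: "(real \<Rightarrow> real) \<Rightarrow> real \<Rightarrow> ereal" where
  "psi_star p z = right_deriv01 (lcm01 (Jfun p)) (cdf p z)"

text \<open>Interior of the support S_0 = (inf{z : p z > 0}, sup{z : p z > 0}), in the extended reals.\<close>
definition supp_int :: "(real \<Rightarrow> real) \<Rightarrow> real set" where
  "supp_int p = {z. Inf (ereal ` {x. p x > 0}) < ereal z \<and> ereal z < Sup (ereal ` {x. p x > 0})}"

end

theory Submission
  imports Defs
begin

locale dens =
  fixes p :: "real \<Rightarrow> real"
  assumes nonneg: "\<And>x. p x \<ge> 0"
    and integrable: "p integrable_on UNIV"
    and total: "integral UNIV p = 1"
    and unif: "uniformly_continuous_on UNIV p"
begin

abbreviation "F \<equiv> cdf p"

lemma pcont: "continuous_on UNIV p"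
  using unif uniformly_continuous_imp_continuous by blast

lemma pcont_at: "isCont p x"
  using pcont by (simp add: continuous_on_eq_continuous_at)

lemma int_sub: "p integrable_on S" if "S \<in> sets lebesgue" for S
proof -
  have "p absolutely_integrable_on UNIV"
    using integrable nonneg by (simp add: nonnegative_absolutely_integrable_1)
  then have "p absolutely_integrable_on S"
    by (rule set_integrable_subset) (use that in auto)
  then show ?thesis using set_lebesgue_integral_eq_integral(1) by blast
qed

lemma int_atMost: "p integrable_on {..x}"
  by (rule int_sub) auto

lemma int_Icc: "p integrable_on {x..y}"
  by (rule int_sub) auto

lemma F_split: "x \<le> y \<Longrightarrow> F y = F x + integral {x..y} p"
proof -
  assume xy: "x \<le> y"
  have "{..y} = {..x} \<union> {x..y}" using xy by auto
  moreover have "negligible ({..x} \<inter> {x..y})"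
    using xy by (subgoal_tac "{..x} \<inter> {x..y} = {x}") auto
  ultimately show ?thesis unfolding cdf_def
    using int_atMost int_Icc by simp
qed

lemma F_nonneg: "F x \<ge> 0"
  unfolding cdf_def using nonneg by (simp add: integral_nonneg int_atMost)

lemma F_le1: "F x \<le> 1"
  unfolding cdf_def total[symmetric]
  by (rule integral_subset_le) (use int_atMost integrable nonneg in auto)

lemma int_Icc_nonneg: "integral {x..y} p \<ge> 0"
  using nonneg by (simp add: integral_nonneg int_Icc)

lemma F_mono: "x \<le> y \<Longrightarrow> F x \<le> F y"
  using F_split int_Icc_nonneg by fastforce

lemma F_deriv: "(F has_real_derivative p x) (at x)"
proof -
  have d: "((\<lambda>y. integral {x-1..y} p) has_real_derivative p x) (at x within {x-1..x+1})"
    by (rule integral_has_real_derivative) (use pcont continuous_on_subset in auto)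
  have d2: "((\<lambda>y. integral {x-1..y} p) has_real_derivative p x) (at x)"
    using d by (subst (asm) at_within_interior) (auto simp: interior_atLeastAtMost_real)
  have "((\<lambda>y. F (x-1) + integral {x-1..y} p) has_real_derivative p x) (at x)"
    using d2 by (auto intro!: derivative_eq_intros)
  then show ?thesis
  proof (rule has_field_derivative_transform_within_open[where S="{x-1<..}"])
    fix y :: real assume "y \<in> {x-1<..}"
    then show "F (x-1) + integral {x-1..y} p = F y" using F_split[of "x-1" y] by auto
  qed auto
qed

lemma F_cont: "continuous_on UNIV F"
  using F_deriv by (meson DERIV_isCont continuous_at_imp_continuous_on)

lemma F_isCont: "isCont F x"
  using F_deriv DERIV_isCont by blast

lemma UC: assumes "e > 0"
  shows "\<exists>\<eta>>0. \<forall>z h. 0 \<le> h \<and> h \<le> \<eta> \<longrightarrow>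
     F (z+h) - F z \<ge> h * (p z - e) \<and> F z - F (z-h) \<ge> h * (p z - e)"
proof -
  obtain d where d: "d > 0" "\<And>x y. dist y x < d \<Longrightarrow> dist (p y) (p x) < e"
    using unif assms unfolding uniformly_continuous_on_def by blast
  show ?thesis
  proof (intro exI[of _ "d/2"] conjI allI impI)
    fix z h :: real assume h: "0 \<le> h \<and> h \<le> d/2"
    have "integral {z..z+h} (\<lambda>_. p z - e) \<le> integral {z..z+h} p"
    proof (rule integral_le)
      fix w assume "w \<in> {z..z+h}"
      then have "dist w z < d" using h d by (auto simp: dist_real_def)
      then have "\<bar>p w - p z\<bar> < e" using d(2)[of z w] by (auto simp: dist_real_def abs_minus_commute)
      then show "p z - e \<le> p w" by linarith
    qed (auto simp: int_Icc)
    then show "F (z+h) - F z \<ge> h * (p z - e)" using F_split[of z "z+h"] h by simp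
    have "integral {z-h..z} (\<lambda>_. p z - e) \<le> integral {z-h..z} p"
    proof (rule integral_le)
      fix w assume "w \<in> {z-h..z}"
      then have "dist w z < d" using h d by (auto simp: dist_real_def)
      then have "\<bar>p w - p z\<bar> < e" using d(2)[of z w] by (auto simp: dist_real_def abs_minus_commute)
      then show "p z - e \<le> p w" by linarith
    qed (auto simp: int_Icc)
    then show "F z - F (z-h) \<ge> h * (p z - e)" using F_split[of "z-h" z] h by simp
  qed (use d in auto)
qed

lemma p_bounded: "\<exists>B>0. \<forall>x. p x \<le> B"
proof -
  obtain \<eta> where e: "\<eta> > 0" "\<And>z h. 0 \<le> h \<and> h \<le> \<eta> \<Longrightarrow> F (z+h) - F z \<ge> h * (p z - 1)"
    using UC[of 1] by auto
  show ?thesis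
  proof (intro exI[of _ "1 + 1/\<eta>"] conjI allI)
    fix x
    have "\<eta> * (p x - 1) \<le> 1" using e(2)[of \<eta> x] e(1) F_le1[of "x+\<eta>"] F_nonneg[of x] by auto
    then have "p x - 1 \<le> 1/\<eta>" using e(1) by (simp add: field_simps mult.commute)
    then show "p x \<le> 1 + 1/\<eta>" by simp
  qed (use e(1) in \<open>auto intro: add_pos_pos\<close>)
qed

lemma pos_strict: assumes "p z > 0" "h > 0"
  shows "F (z-h) < F z" "F z < F (z+h)"
proof -
  obtain \<eta> where e: "\<eta> > 0" "\<And>z' h. 0 \<le> h \<and> h \<le> \<eta> \<Longrightarrow>
     F (z'+h) - F z' \<ge> h * (p z' - p z/2) \<and> F z' - F (z'-h) \<ge> h * (p z' - p z/2)"
    using UC[of "p z/2"] assms by auto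
  define k where "k = min h \<eta>"
  have k: "k > 0" "k \<le> h" "k \<le> \<eta>" using assms e unfolding k_def by auto
  have pos: "k * (p z - p z/2) > 0" using k assms by simp
  have "F z - F (z-k) > 0" using e(2)[of k z] k pos by linarith
  moreover have "F (z-h) \<le> F (z-k)" using k by (intro F_mono) auto
  ultimately show "F (z-h) < F z" by linarith
  have "F (z+k) - F z > 0" using e(2)[of k z] k pos by linarith
  moreover have "F (z+k) \<le> F (z+h)" using k by (intro F_mono) auto
  ultimately show "F z < F (z+h)" by linarith
qed

lemma F_lim_top: "(\<lambda>n. F (real n)) \<longlonglongrightarrow> 1"
proof -
  have "(\<lambda>n. integral UNIV (\<lambda>x. if x \<in> {..real n} then p x else 0)) \<longlonglongrightarrow> integral UNIV p"
  proof (rule dominated_convergence(2)[where h=p])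
    fix n show "(\<lambda>x. if x \<in> {..real n} then p x else 0) integrable_on UNIV"
      using int_atMost integrable_restrict_UNIV by blast
  next
    fix n x show "norm (if x \<in> {..real n} then p x else 0) \<le> p x" using nonneg[of x] by auto
  next
    fix x :: real
    have "eventually (\<lambda>n. (if x \<in> {..real n} then p x else 0) = p x) sequentially"
      using eventually_ge_at_top[of "nat \<lceil>x\<rceil>"]
      by eventually_elim (use real_nat_ceiling_ge[of x] in \<open>auto dest!: of_nat_mono[where 'a=real]\<close>)
    then show "(\<lambda>n. if x \<in> {..real n} then p x else 0) \<longlonglongrightarrow> p x"
      by (simp add: tendsto_eventually)
  qed (use integrable in auto)
  then show ?thesis unfolding cdf_def total[symmetric] integral_restrict_UNIV .
qed

lemma F_lim_bot: "(\<lambda>n. F (- real n)) \<longlonglongrightarrow> 0"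
proof -
  define f where "f = (\<lambda>n::nat. \<lambda>x::real. if x \<in> {..- real n} then p x else 0)"
  have A: "\<And>n. f n integrable_on UNIV" unfolding f_def
      using int_atMost integrable_restrict_UNIV by blast
  have B: "\<And>n x. x \<in> UNIV \<Longrightarrow> norm (f n x) \<le> p x" unfolding f_def using nonneg by auto
  have C: "(\<lambda>n. f n x) \<longlonglongrightarrow> 0" if "x \<in> UNIV" for x
  proof -
    have "eventually (\<lambda>n. f n x = 0) sequentially"
      using eventually_ge_at_top[of "nat \<lceil>-x\<rceil> + 1"] unfolding f_def
      by eventually_elim (use real_nat_ceiling_ge[of "-x"] in \<open>auto dest!: of_nat_mono[where 'a=real]\<close>)
    then show ?thesis by (simp add: tendsto_eventually)
  qed
  have "(\<lambda>n. integral UNIV (f n)) \<longlonglongrightarrow> integral UNIV (\<lambda>x. 0::real)"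
    using dominated_convergence(2)[of f UNIV p "\<lambda>x. 0"] A B C integrable by auto
  then show ?thesis unfolding cdf_def f_def integral_restrict_UNIV by simp
qed

lemma F_above: "u < 1 \<Longrightarrow> \<exists>R. F R > u"
proof -
  assume "u < 1"
  then have "eventually (\<lambda>n. F (real n) > u) sequentially"
    using F_lim_top order_tendstoD(1) by blast
  then show ?thesis by (meson eventually_sequentially order_refl)
qed

lemma F_below: "u > 0 \<Longrightarrow> \<exists>L. F L < u"
proof -
  assume "u > 0"
  then have "eventually (\<lambda>n. F (- real n) < u) sequentially"
    using F_lim_bot order_tendstoD(2) by blast
  then show ?thesis by (meson eventually_sequentially order_refl)
qed

abbreviation "J \<equiv> Jfun p"

lemma QL: assumes u: "0 < u" and ex: "\<exists>w. u \<le> F w"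
  shows "\<exists>m. quantile p u = ereal m \<and> F m = u \<and> (\<forall>w. u \<le> F w \<longrightarrow> m \<le> w)"
proof -
  define S where "S = {w. u \<le> F w}"
  obtain L where L: "F L < u" using F_below u by blast
  have ne: "S \<noteq> {}" using ex S_def by auto
  have bdd: "bdd_below S" unfolding S_def bdd_below_def
  proof (intro exI[of _ L] ballI)
    fix w assume "w \<in> {w. u \<le> F w}"
    then show "L \<le> w" using L F_mono[of w L] by force
  qed
  have cl: "closed S" unfolding S_def
    by (rule closed_Collect_le) (use F_cont in auto)
  define m where "m = Inf S"
  have mS: "m \<in> S" unfolding m_def using closed_contains_Inf ne bdd cl by blast
  have mmin: "\<forall>w. u \<le> F w \<longrightarrow> m \<le> w" unfolding m_def using bdd S_def by (auto intro: cInf_lower)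
  have Lm: "L \<le> m" using mS L F_mono[of m L] S_def by force
  obtain x where x: "L \<le> x" "x \<le> m" "F x = u"
    using IVT'[of F L u m] Lm mS L F_cont S_def by (auto intro: continuous_on_subset)
  have "m \<le> x" using mmin x by auto
  then have Fm: "F m = u" using x by auto
  have q: "quantile p u = ereal m"
    unfolding quantile_def
  proof (rule antisym)
    show "Inf {z. u \<le> cdf_ext p z} \<le> ereal m"
      by (rule Inf_lower) (use Fm in \<open>auto simp: cdf_ext_def\<close>)
    show "ereal m \<le> Inf {z. u \<le> cdf_ext p z}"
    proof (rule Inf_greatest)
      fix z assume "z \<in> {z. u \<le> cdf_ext p z}"
      then have z: "u \<le> cdf_ext p z" by simp
      show "ereal m \<le> z"
      proof (cases z)
        case (real r) then show ?thesis using z mmin by (auto simp: cdf_ext_def)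
      next
        case PInf then show ?thesis by simp
      next
        case MInf then show ?thesis using z u by (simp add: cdf_ext_def)
      qed
    qed
  qed
  show ?thesis using q Fm mmin by blast
qed

lemma QL0: "quantile p 0 = -\<infinity>"
  unfolding quantile_def
  by (rule antisym, rule Inf_lower) (auto simp: cdf_ext_def)

lemma QLnone: assumes "u \<le> 1" "\<not> (\<exists>w. u \<le> F w)" shows "quantile p u = \<infinity>"
proof -
  have "{z. u \<le> cdf_ext p z} = {\<infinity>}"
  proof (intro set_eqI iffI)
    fix z assume "z \<in> {z. u \<le> cdf_ext p z}"
    moreover have "\<And>w. F w < u" using assms(2) by (simp add: not_le)
    moreover have "0 < u" using \<open>\<And>w. F w < u\<close>[of 0] F_nonneg[of 0] by linarith
    ultimately show "z \<in> {\<infinity>}"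
      by (cases z) (auto simp: cdf_ext_def not_le[symmetric])
  qed (use assms in \<open>auto simp: cdf_ext_def\<close>)
  then show ?thesis unfolding quantile_def by simp
qed

lemma J0: "J 0 = 0"
  unfolding Jfun_def QL0 dens_ext_def by simp

lemma J_nonneg: "J u \<ge> 0"
  unfolding Jfun_def dens_ext_def using nonneg by auto

lemma J_bound: assumes "\<forall>x. p x \<le> B" "B \<ge> 0" shows "J u \<le> B"
  unfolding Jfun_def dens_ext_def using assms by auto

lemma JQ: assumes "0 < u" "u \<le> 1"
  shows "J u = 0 \<or> (\<exists>m. J u = p m \<and> F m = u \<and> (\<forall>w. u \<le> F w \<longrightarrow> m \<le> w))"
proof (cases "\<exists>w. u \<le> F w")
  case True
  then obtain m where "quantile p u = ereal m \<and> F m = u \<and> (\<forall>w. u \<le> F w \<longrightarrow> m \<le> w)"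
    using QL assms by blast
  then show ?thesis unfolding Jfun_def dens_ext_def by auto
next
  case False
  then show ?thesis using QLnone assms unfolding Jfun_def dens_ext_def by auto
qed

lemma p_zero_F1: "F z = 1 \<Longrightarrow> p z = 0"
  using pos_strict(2)[of z 1] F_le1[of "z+1"] nonneg[of z] by fastforce

lemma p_zero_F0: "F z = 0 \<Longrightarrow> p z = 0"
  using pos_strict(1)[of z 1] F_nonneg[of "z-1"] nonneg[of z] by fastforce

lemma J1: "J 1 = 0"
  using JQ[of 1] p_zero_F1 by auto

lemma pJF: "p z = J (F z)"
proof -
  consider "F z = 0" | "F z = 1" | "0 < F z" "F z < 1"
    using F_nonneg[of z] F_le1[of z] by fastforce
  then show ?thesis
  proof cases
    case 1 then show ?thesis using J0 p_zero_F0 by simp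
  next
    case 2 then show ?thesis using J1 p_zero_F1 by simp
  next
    case 3
    then obtain m where m: "J (F z) = p m" "F m = F z" "\<forall>w. F z \<le> F w \<longrightarrow> m \<le> w"
      using QL[of "F z"] unfolding Jfun_def dens_ext_def by fastforce
    have "m \<le> z" using m by auto
    show ?thesis
    proof (cases "m = z")
      case True then show ?thesis using m by simp
    next
      case False
      then have "m < z" using \<open>m \<le> z\<close> by simp
      have "p z = 0"
        using pos_strict(1)[of z "z - m"] \<open>m < z\<close> m nonneg[of z] by fastforce
      moreover have "p m = 0"
        using pos_strict(2)[of m "z - m"] \<open>m < z\<close> m nonneg[of m] by fastforce
      ultimately show ?thesis using m by simp
    qed
  qed
qed

lemma J_small: assumes "e > 0"
  shows "\<exists>d>0. \<forall>m. p m \<ge> e \<longrightarrow> d \<le> F m \<and> F m \<le> 1 - d"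
proof -
  obtain \<eta> where e: "\<eta> > 0" "\<And>z h. 0 \<le> h \<and> h \<le> \<eta> \<Longrightarrow>
     F (z+h) - F z \<ge> h * (p z - e/2) \<and> F z - F (z-h) \<ge> h * (p z - e/2)"
    using UC[of "e/2"] assms by auto
  show ?thesis
  proof (intro exI[of _ "\<eta>*(e/2)"] conjI allI impI)
    fix m assume pm: "e \<le> p m"
    have "\<eta>*(e/2) \<le> \<eta> * (p m - e/2)" using pm e(1) by (intro mult_left_mono) auto
    moreover have "F (m+\<eta>) - F m \<ge> \<eta> * (p m - e/2)" "F m - F (m-\<eta>) \<ge> \<eta> * (p m - e/2)"
      using e(2)[of \<eta> m] e(1) by auto
    ultimately show "\<eta>*(e/2) \<le> F m" "F m \<le> 1 - \<eta>*(e/2)"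
      using F_nonneg[of "m-\<eta>"] F_le1[of "m+\<eta>"] by linarith+
  qed (use e assms in auto)
qed

end

context dens begin

lemma J_cont: "continuous_on {0..1} J"
  unfolding continuous_on_iff
proof (intro ballI allI impI)
  fix u0 e :: real assume u0: "u0 \<in> {0..1}" and e: "0 < e"
  show "\<exists>d>0. \<forall>u\<in>{0..1}. dist u u0 < d \<longrightarrow> dist (J u) (J u0) < e"
  proof (cases "u0 = 0 \<or> u0 = 1")
    case True
    obtain d where d: "d > 0" "\<And>m. p m \<ge> e \<Longrightarrow> d \<le> F m \<and> F m \<le> 1 - d"
      using J_small e by blast
    have J0': "J u0 = 0" using True J0 J1 by auto
    show ?thesis
    proof (intro exI[of _ d] conjI ballI impI)
      fix u assume u: "u \<in> {0..1}" "dist u u0 < d"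
      show "dist (J u) (J u0) < e"
      proof (cases "u = 0")
        case True then show ?thesis using J0 J0' e by simp
      next
        case False
        then have "0 < u" "u \<le> 1" using u by auto
        from JQ[OF this] show ?thesis
        proof
          assume "J u = 0" then show ?thesis using J0' e by simp
        next
          assume "\<exists>m. J u = p m \<and> F m = u \<and> (\<forall>w. u \<le> F w \<longrightarrow> m \<le> w)"
          then obtain m where m: "J u = p m" "F m = u" by blast
          have "p m < e"
          proof (rule ccontr)
            assume "\<not> p m < e"
            then have "d \<le> F m \<and> F m \<le> 1 - d" using d by simp
            then show False using True u m by (auto simp: dist_real_def)
          qed
          then show ?thesis using m J0' nonneg[of m] by (simp add: dist_real_def)
        qed
      qed
    qed (use d in auto)
  next
    case False
    then have u0': "0 < u0" "u0 < 1" using u0 by auto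
    obtain a where a: "quantile p u0 = ereal a" "F a = u0" "\<forall>w. u0 \<le> F w \<longrightarrow> a \<le> w"
    proof -
      obtain R where "u0 < F R" using F_above u0' by blast
      then have "\<exists>w. u0 \<le> F w" by (auto intro: less_imp_le)
      then show ?thesis using QL[of u0] u0' that by blast
    qed
    have Ja: "J u0 = p a" unfolding Jfun_def dens_ext_def a by simp
    define S where "S = {w. F w \<le> u0}"
    obtain R where R: "F R > u0" using F_above u0' by blast
    have bdd: "bdd_above S" unfolding S_def bdd_above_def
    proof (intro exI[of _ R] ballI)
      fix w assume "w \<in> {w. F w \<le> u0}"
      then show "w \<le> R" using R F_mono[of R w] by (cases "w \<le> R") auto
    qed
    have cl: "closed S" unfolding S_def
      by (rule closed_Collect_le) (use F_cont in auto)
    define b where "b = Sup S"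
    have aS: "a \<in> S" using a(2) unfolding S_def by simp
    have bS: "b \<in> S" unfolding b_def using aS bdd cl by (intro closed_contains_Sup) auto
    have bmax: "\<And>w. F w \<le> u0 \<Longrightarrow> w \<le> b" unfolding b_def
      by (rule cSup_upper) (use bdd in \<open>auto simp: S_def\<close>)
    have ab: "a \<le> b" using bmax a(2) by simp
    have Fb: "F b = u0"
    proof -
      have "F b \<le> u0" using bS unfolding S_def by simp
      moreover have "F a \<le> F b" using F_mono[OF ab] .
      ultimately show ?thesis using a(2) by linarith
    qed
    have pab: "p b = p a"
    proof (cases "a = b")
      case False
      then have "a < b" using ab by simp
      have "p b = 0"
        using pos_strict(1)[of b "b - a"] \<open>a < b\<close> a(2) Fb nonneg[of b] by fastforce
      moreover have "p a = 0"
        using pos_strict(2)[of a "b - a"] \<open>a < b\<close> a(2) Fb nonneg[of a] by fastforce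
      ultimately show ?thesis by simp
    qed simp
    obtain \<eta> where eta: "\<eta> > 0" "\<And>x y. dist y x < \<eta> \<Longrightarrow> dist (p y) (p x) < e"
      using unif e unfolding uniformly_continuous_on_def by blast
    have Fl: "F (a - \<eta>/2) < u0"
    proof (rule ccontr)
      assume "\<not> F (a - \<eta>/2) < u0"
      then have "a \<le> a - \<eta>/2" using a by simp
      then show False using eta by simp
    qed
    have Fr: "F (b + \<eta>/2) > u0"
    proof (rule ccontr)
      assume "\<not> F (b + \<eta>/2) > u0"
      then have "b + \<eta>/2 \<le> b" using bmax[of "b + \<eta>/2"] by simp
      then show False using eta by simp
    qed
    define d where "d = min (u0 - F (a - \<eta>/2)) (F (b + \<eta>/2) - u0)"
    show ?thesis
    proof (intro exI[of _ d] conjI ballI impI)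
      show "d > 0" unfolding d_def using Fl Fr by simp
      fix u assume u: "u \<in> {0..1}" "dist u u0 < d"
      have ul: "F (a - \<eta>/2) < u" and ur: "u < F (b + \<eta>/2)"
        using u unfolding d_def by (auto simp: dist_real_def)
      have u01: "0 < u" "u < 1" using ul ur F_nonneg[of "a-\<eta>/2"] F_le1[of "b+\<eta>/2"] by linarith+
      obtain m where m: "quantile p u = ereal m" "F m = u" "\<forall>w. u \<le> F w \<longrightarrow> m \<le> w"
        using QL[of u] u01 ur by (metis less_le)
      have Jm: "J u = p m" unfolding Jfun_def dens_ext_def m by simp
      consider "u = u0" | "u < u0" | "u > u0" by fastforce
      then show "dist (J u) (J u0) < e"
      proof cases
        case 1 then show ?thesis using e by simp
      next
        case 2
        have "m < a"
        proof (rule ccontr)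
          assume "\<not> m < a" then have "F a \<le> F m" using F_mono by simp
          then show False using m a 2 by simp
        qed
        moreover have "a - \<eta>/2 < m"
        proof (rule ccontr)
          assume "\<not> a - \<eta>/2 < m" then have "F m \<le> F (a - \<eta>/2)" using F_mono by simp
          then show False using m ul by simp
        qed
        ultimately have "dist m a < \<eta>" using eta by (auto simp: dist_real_def)
        then show ?thesis using eta(2) Jm Ja by simp
      next
        case 3
        have "b < m"
        proof (rule ccontr)
          assume "\<not> b < m" then have "F m \<le> F b" using F_mono by simp
          then show False using m Fb 3 by simp
        qed
        moreover have "m \<le> b + \<eta>/2" using m ur by simp
        ultimately have "dist m b < \<eta>" using eta by (auto simp: dist_real_def)
        then show ?thesis using eta(2)[of m b] Jm Ja pab by simp
      qed
    qed
  qed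
qed

end

locale majo =
  fixes j :: "real \<Rightarrow> real" and B :: real
  assumes jc: "continuous_on {0..1} j"
    and jnn: "\<And>u. u \<in> {0..1} \<Longrightarrow> 0 \<le> j u"
    and jB: "\<And>u. u \<in> {0..1} \<Longrightarrow> j u \<le> B"
    and j0: "j 0 = 0" and j1: "j 1 = 0"
begin

abbreviation "G \<equiv> lcm01 j"

definition "Maj = {g. concave_on {0..1} g \<and> (\<forall>v\<in>{0..1}. j v \<le> g v)}"

lemma B_nonneg: "B \<ge> 0" using jnn[of 0] jB[of 0] by auto

lemma G_eq: "G u = Inf ((\<lambda>g. g u) ` Maj)"
  unfolding lcm01_def Maj_def by (rule arg_cong[where f=Inf]) auto

lemma const_Maj: "(\<lambda>_. B) \<in> Maj"
  unfolding Maj_def using jB by (auto simp: concave_on_const convex_real_interval)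

lemma G_le: "g \<in> Maj \<Longrightarrow> u \<in> {0..1} \<Longrightarrow> G u \<le> g u"
  unfolding G_eq
proof (rule cInf_lower)
  assume u: "u \<in> {0..1}"
  show "bdd_below ((\<lambda>g. g u) ` Maj)"
    unfolding bdd_below_def Maj_def using u by (intro exI[of _ "j u"]) auto
qed auto

lemma G_ge: "u \<in> {0..1} \<Longrightarrow> j u \<le> G u"
  unfolding G_eq using const_Maj by (intro cInf_greatest) (auto simp: Maj_def)

lemma G_nonneg: "u \<in> {0..1} \<Longrightarrow> 0 \<le> G u"
  using G_ge jnn by force

lemma G_B: "u \<in> {0..1} \<Longrightarrow> G u \<le> B"
  using G_le[OF const_Maj] by simp

lemma G_concave: "concave_on {0..1} G"
proof (rule concave_on_linorderI)
  fix t x y :: real assume t: "0 < t" "t < 1" and xy: "x \<in> {0..1}" "y \<in> {0..1}" "x < y"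
  have xt: "(1 - t) *\<^sub>R x + t *\<^sub>R y \<in> {0..1}"
    using convexD_alt[OF convex_real_interval(5)[of 0 1] xy(1,2), of t] t by (simp add: algebra_simps)
  show "(1 - t) * G x + t * G y \<le> G ((1 - t) *\<^sub>R x + t *\<^sub>R y)"
    unfolding G_eq[of "(1 - t) *\<^sub>R x + t *\<^sub>R y"]
  proof (rule cInf_greatest)
    show "(\<lambda>g. g ((1 - t) *\<^sub>R x + t *\<^sub>R y)) ` Maj \<noteq> {}" using const_Maj by blast
  next
    fix r assume "r \<in> (\<lambda>g. g ((1 - t) *\<^sub>R x + t *\<^sub>R y)) ` Maj"
    then obtain g where g: "g \<in> Maj" "r = g ((1 - t) *\<^sub>R x + t *\<^sub>R y)" by blast
    have "(1 - t) * g x + t * g y \<le> r"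
      using concave_onD[of "{0..1}" g t x y] g xy t by (auto simp: Maj_def)
    moreover have "(1 - t) * G x \<le> (1 - t) * g x" using G_le[OF g(1) xy(1)] t by simp
    moreover have "t * G y \<le> t * g y" using G_le[OF g(1) xy(2)] t by simp
    ultimately show "(1 - t) * G x + t * G y \<le> r" by linarith
  qed
qed (simp add: convex_real_interval)

lemma affine_Maj: assumes "\<And>v. v \<in> {0..1} \<Longrightarrow> j v \<le> a + b * v"
  shows "(\<lambda>v. a + b * v) \<in> Maj"
  unfolding Maj_def
proof (intro CollectI conjI)
  show "concave_on {0..1} (\<lambda>v. a + b * v)"
    by (rule concave_on_linorderI) (auto simp: algebra_simps convex_real_interval)
qed (use assms in auto)

lemma G_small0: assumes e: "e > 0" shows "\<exists>d>0. \<forall>u\<in>{0..1}. u < d \<longrightarrow> G u < e"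
proof -
  obtain \<delta> where dl: "\<delta> > 0" "\<And>u. u \<in> {0..1} \<Longrightarrow> dist u 0 < \<delta> \<Longrightarrow> dist (j u) (j 0) < e/2"
    using jc e unfolding continuous_on_iff by (metis atLeastAtMost_iff half_gt_zero order_refl zero_le_one)
  have maj: "(\<lambda>v. e/2 + (B/\<delta>) * v) \<in> Maj"
  proof (rule affine_Maj)
    fix v :: real assume v: "v \<in> {0..1}"
    show "j v \<le> e/2 + (B/\<delta>) * v"
    proof (cases "v < \<delta>")
      case True
      then have "j v < e/2" using dl(2)[OF v] v j0 by (auto simp: dist_real_def)
      moreover have "(B/\<delta>) * v \<ge> 0" using B_nonneg dl v by auto
      ultimately show ?thesis by linarith
    next
      case False
      then have "1 \<le> v/\<delta>" using dl by simp
      then have "B \<le> B * (v/\<delta>)" using B_nonneg by (metis mult.right_neutral mult_left_mono)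
      then show ?thesis using jB[OF v] e by simp
    qed
  qed
  define d where "d = e*\<delta>/(2*(B+1))"
  have d: "d > 0" unfolding d_def using e dl B_nonneg by simp
  have bd: "(B/\<delta>) * d < e/2"
  proof -
    have "(B/\<delta>) * d = e/2 * (B/(B+1))" unfolding d_def using dl B_nonneg by (simp add: field_simps)
    moreover have "e/2 * (B/(B+1)) < e/2 * 1" using B_nonneg e by (intro mult_strict_left_mono) auto
    ultimately show ?thesis by simp
  qed
  show ?thesis
  proof (intro exI[of _ d] conjI ballI impI)
    fix u :: real assume u: "u \<in> {0..1}" "u < d"
    have "G u \<le> e/2 + (B/\<delta>) * u" using G_le[OF maj u(1)] by simp
    moreover have "(B/\<delta>) * u \<le> (B/\<delta>) * d" using u B_nonneg dl by (intro mult_left_mono) auto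
    ultimately show "G u < e" using bd by linarith
  qed (rule d)
qed

lemma G_small1: assumes e: "e > 0" shows "\<exists>d>0. \<forall>u\<in>{0..1}. 1 - u < d \<longrightarrow> G u < e"
proof -
  obtain \<delta> where dl: "\<delta> > 0" "\<And>u. u \<in> {0..1} \<Longrightarrow> dist u 1 < \<delta> \<Longrightarrow> dist (j u) (j 1) < e/2"
    using jc e unfolding continuous_on_iff by (metis atLeastAtMost_iff half_gt_zero order_refl zero_le_one)
  have maj: "(\<lambda>v. (e/2 + B/\<delta>) + (-B/\<delta>) * v) \<in> Maj"
  proof (rule affine_Maj)
    fix v :: real assume v: "v \<in> {0..1}"
    have eq: "(e/2 + B/\<delta>) + (-B/\<delta>) * v = e/2 + (B/\<delta>) * (1 - v)" by (simp add: right_diff_distrib)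
    show "j v \<le> (e/2 + B/\<delta>) + (-B/\<delta>) * v"
      unfolding eq
    proof (cases "1 - v < \<delta>")
      case True
      then have "j v < e/2" using dl(2)[OF v] v j1 by (auto simp: dist_real_def)
      moreover have "(B/\<delta>) * (1 - v) \<ge> 0" using B_nonneg dl v by auto
      ultimately show "j v \<le> e/2 + (B/\<delta>) * (1 - v)" by linarith
    next
      case False
      then have "1 \<le> (1 - v)/\<delta>" using dl by simp
      then have "B \<le> B * ((1-v)/\<delta>)" using B_nonneg by (metis mult.right_neutral mult_left_mono)
      then show "j v \<le> e/2 + (B/\<delta>) * (1 - v)" using jB[OF v] e by simp
    qed
  qed
  define d where "d = e*\<delta>/(2*(B+1))"
  have d: "d > 0" unfolding d_def using e dl B_nonneg by simp
  have bd: "(B/\<delta>) * d < e/2"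
  proof -
    have "(B/\<delta>) * d = e/2 * (B/(B+1))" unfolding d_def using dl B_nonneg by (simp add: field_simps)
    moreover have "e/2 * (B/(B+1)) < e/2 * 1" using B_nonneg e by (intro mult_strict_left_mono) auto
    ultimately show ?thesis by simp
  qed
  show ?thesis
  proof (intro exI[of _ d] conjI ballI impI)
    fix u :: real assume u: "u \<in> {0..1}" "1 - u < d"
    have "G u \<le> e/2 + (B/\<delta>) * (1 - u)" using G_le[OF maj u(1)] by (simp add: right_diff_distrib)
    moreover have "(B/\<delta>) * (1 - u) \<le> (B/\<delta>) * d" using u B_nonneg dl by (intro mult_left_mono) auto
    ultimately show "G u < e" using bd by linarith
  qed (rule d)
qed

lemma G0: "G 0 = 0"
proof -
  have H: "G 0 < e" if "e > 0" for e using G_small0[OF that] by force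
  have "G 0 \<le> 0" by (cases "G 0 > 0") (use H[of "G 0"] in auto)
  then show ?thesis using G_nonneg[of 0] by simp
qed

lemma G1: "G 1 = 0"
proof -
  have H: "G 1 < e" if "e > 0" for e using G_small1[OF that] by force
  have "G 1 \<le> 0" by (cases "G 1 > 0") (use H[of "G 1"] in auto)
  then show ?thesis using G_nonneg[of 1] by simp
qed

lemma G_cont: "continuous_on {0..1} G"
proof -
  have ci: "continuous_on {0<..<1} (\<lambda>x. - G x)"
    by (rule convex_on_continuous) (use G_concave in \<open>auto simp: concave_on_def intro: convex_on_subset\<close>)
  then have ci2: "continuous_on {0<..<1} G"
    using continuous_on_minus[OF ci] by simp
  show ?thesis unfolding continuous_on_eq_continuous_within
  proof
    fix x :: real assume x: "x \<in> {0..1}"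
    consider "x = 0" | "x = 1" | "0 < x" "x < 1" using x by fastforce
    then show "continuous (at x within {0..1}) G"
    proof cases
      case 1
      show ?thesis unfolding continuous_within_eps_delta 1 G0
      proof (intro allI impI)
        fix e :: real assume "e > 0"
        then obtain d where "d > 0" "\<forall>u\<in>{0..1}. u < d \<longrightarrow> G u < e" using G_small0 by blast
        then show "\<exists>d>0. \<forall>x'\<in>{0..1}. dist x' 0 < d \<longrightarrow> dist (G x') 0 < e"
          using G_nonneg by (intro exI[of _ d]) (auto simp: dist_real_def)
      qed
    next
      case 2
      show ?thesis unfolding continuous_within_eps_delta 2 G1
      proof (intro allI impI)
        fix e :: real assume "e > 0"
        then obtain d where "d > 0" "\<forall>u\<in>{0..1}. 1 - u < d \<longrightarrow> G u < e" using G_small1 by blast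
        then show "\<exists>d>0. \<forall>x'\<in>{0..1}. dist x' 1 < d \<longrightarrow> dist (G x') 0 < e"
          using G_nonneg by (intro exI[of _ d]) (auto simp: dist_real_def)
      qed
    next
      case 3
      then have "isCont G x" using ci2 by (simp add: continuous_on_eq_continuous_at)
      then show ?thesis by (rule continuous_at_imp_continuous_at_within)
    qed
  qed
qed

definition "sl u v = (G v - G u) / (v - u)"

lemma three: assumes "0 \<le> x" "x < t" "t < y" "y \<le> 1"
  shows "sl x y \<le> sl x t" "sl t y \<le> sl x y"
proof -
  have cv: "convex_on {0..1} (\<lambda>x. - G x)" using G_concave by (simp add: concave_on_def)
  note c = convex_on_slope_le[OF cv, of x y t]
  have e1: "(- G x - - G t) / (x - t) = - sl x t" unfolding sl_def using assms
    by (simp add: field_simps)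
  have e2: "(- G x - - G y) / (x - y) = - sl x y" unfolding sl_def using assms
    by (simp add: field_simps)
  have e3: "(- G t - - G y) / (t - y) = - sl t y" unfolding sl_def using assms
    by (simp add: field_simps)
  show "sl x y \<le> sl x t" "sl t y \<le> sl x y" using c assms e1 e2 e3 by auto
qed

definition "Dd u = (SUP v\<in>{u<..1}. ereal (sl u v))"

lemma Dd_upper: "u < v \<Longrightarrow> v \<le> 1 \<Longrightarrow> ereal (sl u v) \<le> Dd u"
  unfolding Dd_def by (rule SUP_upper) auto

lemma Dd_le: assumes "0 \<le> u" "u < u'" "u' < 1" shows "Dd u' \<le> ereal (sl u u')"
  unfolding Dd_def
proof (rule SUP_least)
  fix v assume "v \<in> {u'<..1}"
  then show "ereal (sl u' v) \<le> ereal (sl u u')"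
    using three(1,2)[of u u' v] assms by auto
qed

lemma Dd_mono: assumes "0 \<le> u" "u \<le> u'" "u' < 1" shows "Dd u' \<le> Dd u"
proof (cases "u = u'")
  case False
  then show ?thesis using Dd_le[of u u'] Dd_upper[of u u'] assms by (meson order.trans order_le_less)
qed simp

lemma RD: assumes "0 \<le> u" "u < 1" shows "right_deriv G u = Dd u"
  unfolding right_deriv_def
proof (rule tendsto_Lim)
  show "((\<lambda>v. ereal ((G v - G u) / (v - u))) \<longlongrightarrow> Dd u) (at_right u)"
  proof (rule order_tendstoI)
    fix y assume "y < Dd u"
    then obtain v0 where v0: "v0 \<in> {u<..1}" "y < ereal (sl u v0)" unfolding Dd_def less_SUP_iff by blast
    have "eventually (\<lambda>v. v \<in> {u<..<v0}) (at_right u)" using v0 by (intro eventually_at_right_real) auto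
    then show "eventually (\<lambda>v. y < ereal ((G v - G u) / (v - u))) (at_right u)"
    proof eventually_elim
      case (elim v)
      then have "sl u v0 \<le> sl u v" using three(1)[of u v v0] v0 assms by auto
      then show ?case using v0(2) unfolding sl_def by (meson ereal_less_eq(3) order_less_le_trans)
    qed
  next
    fix y assume y: "Dd u < y"
    have "eventually (\<lambda>v. v \<in> {u<..<1}) (at_right u)" using assms by (intro eventually_at_right_real) auto
    then show "eventually (\<lambda>v. ereal ((G v - G u) / (v - u)) < y) (at_right u)"
    proof eventually_elim
      case (elim v)
      then show ?case using Dd_upper[of u v] y unfolding sl_def by auto
    qed
  qed
qed simp

lemma Dd_fin: assumes "0 < u" "u < 1" shows "\<bar>Dd u\<bar> \<noteq> \<infinity>"
proof -
  have "ereal (sl u 1) \<le> Dd u" using Dd_upper assms by auto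
  moreover have "Dd u \<le> ereal (sl 0 u)" using Dd_le[of 0 u] assms by auto
  ultimately show ?thesis by auto
qed

lemma Dd_rc: assumes u0: "0 \<le> u0" "u0 < 1" and y: "y < Dd u0"
  shows "\<exists>\<delta>>0. \<forall>u. u0 \<le> u \<and> u < u0 + \<delta> \<longrightarrow> y < Dd u"
proof -
  obtain v0 where v0: "v0 \<in> {u0<..1}" "y < ereal (sl u0 v0)" using y unfolding Dd_def less_SUP_iff by blast
  show ?thesis
  proof (cases y)
    case MInf
    have "y < Dd u" if "u0 \<le> u" "u < u0 + (1 - u0)" for u
    proof -
      have "ereal (sl u 1) \<le> Dd u" using Dd_upper that by auto
      then show ?thesis using MInf by auto
    qed
    then show ?thesis using u0 by (intro exI[of _ "1 - u0"]) auto
  next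
    case PInf then show ?thesis using y by simp
  next
    case (real r)
    define w where "w = (u0 + v0) / 2"
    have w: "u0 < w" "w < v0" "0 \<le> w" using v0 u0 unfolding w_def by auto
    have c: "continuous_on {0..w} (\<lambda>u. (G v0 - G u) / (v0 - u))"
      using G_cont w v0 by (intro continuous_intros) (auto intro: continuous_on_subset)
    have gap: "r < sl u0 v0" using v0 real by simp
    obtain d where d: "d > 0" "\<And>u. u \<in> {0..w} \<Longrightarrow> dist u u0 < d \<Longrightarrow>
        dist ((G v0 - G u) / (v0 - u)) ((G v0 - G u0) / (v0 - u0)) < sl u0 v0 - r"
      using c gap w u0 unfolding continuous_on_iff by (metis atLeastAtMost_iff diff_gt_0_iff_gt less_imp_le)
    show ?thesis
    proof (intro exI[of _ "min d (w - u0)"] conjI allI impI)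
      show "min d (w - u0) > 0" using d w by simp
      fix u assume u: "u0 \<le> u \<and> u < u0 + min d (w - u0)"
      then have uw: "u \<in> {0..w}" "dist u u0 < d" using u0 by (auto simp: dist_real_def)
      have "r < sl u v0" using d(2)[OF uw] unfolding sl_def dist_real_def by linarith
      moreover have "ereal (sl u v0) \<le> Dd u" using Dd_upper[of u v0] u w v0 by auto
      ultimately show "y < Dd u" using real by (meson ereal_less_eq(3) less_ereal.simps(1) order_less_le_trans)
    qed
  qed
qed

definition "Ii = (INF u\<in>{0..<1}. Dd u)"

lemma Ii_le: "0 \<le> u \<Longrightarrow> u < 1 \<Longrightarrow> Ii \<le> Dd u"
  unfolding Ii_def by (rule INF_lower) auto

lemma RD1: "right_deriv01 G 1 = Ii"
  unfolding right_deriv01_def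
proof (simp, rule tendsto_Lim)
  have ev: "eventually (\<lambda>u. u \<in> {0<..<1}) (at_left (1::real))" by (rule eventually_at_left_real) simp
  have "(Dd \<longlongrightarrow> Ii) (at_left 1)"
  proof (rule order_tendstoI)
    fix y assume "y < Ii"
    then have "y < Dd u" if "u \<in> {0<..<1}" for u using Ii_le[of u] that by auto
    then show "eventually (\<lambda>u. y < Dd u) (at_left 1)" using ev by (auto elim: eventually_mono)
  next
    fix y assume "Ii < y"
    then obtain u1 where u1: "u1 \<in> {0..<1}" "Dd u1 < y" unfolding Ii_def INF_less_iff by blast
    have "eventually (\<lambda>u. u \<in> {u1<..<1}) (at_left (1::real))" using u1 by (intro eventually_at_left_real) auto
    then show "eventually (\<lambda>u. Dd u < y) (at_left 1)"
    proof eventually_elim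
      case (elim u) then show ?case using Dd_mono[of u1 u] u1 by auto
    qed
  qed
  moreover have "eventually (\<lambda>u. Dd u = right_deriv G u) (at_left 1)"
    using ev by eventually_elim (simp add: RD)
  ultimately show "(right_deriv G \<longlongrightarrow> Ii) (at_left 1)" by (rule Lim_transform_eventually)
qed simp

lemma D0_fin: assumes "Dd 0 \<noteq> \<infinity>" shows "\<exists>C. \<forall>u\<in>{0..1}. j u \<le> C * u"
proof -
  have "ereal (sl 0 1) \<le> Dd 0" using Dd_upper by auto
  then obtain C where C: "Dd 0 = ereal C" using assms by (cases "Dd 0") auto
  show ?thesis
  proof (intro exI[of _ C] ballI)
    fix u :: real assume u: "u \<in> {0..1}"
    show "j u \<le> C * u"
    proof (cases "u = 0")
      case True then show ?thesis using j0 by simp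
    next
      case False
      then have "sl 0 u \<le> C" using Dd_upper[of 0 u] u C by auto
      then have "G u \<le> C * u" using False u G0 unfolding sl_def by (simp add: divide_le_eq)
      then show ?thesis using G_ge[OF u] by linarith
    qed
  qed
qed

lemma D1_fin: assumes "Ii \<noteq> -\<infinity>" shows "\<exists>C. \<forall>u\<in>{0..1}. j u \<le> C * (1 - u)"
proof -
  have "Ii \<le> Dd (1/2)" by (rule Ii_le) auto
  moreover have "\<bar>Dd (1/2)\<bar> \<noteq> \<infinity>" by (rule Dd_fin) auto
  ultimately obtain L where L: "Ii = ereal L" using assms by (cases Ii) auto
  have key: "G u + L * (1 - u) \<le> G 1" if u: "0 \<le> u" "u < 1" for u
  proof -
    have ineq: "G u + L * (v - u) \<le> G v" if v: "u < v" "v < 1" for v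
    proof -
      have "ereal L \<le> Dd v" using Ii_le[of v] L v u by auto
      also have "Dd v \<le> ereal (sl u v)" using Dd_le[of u v] u v by auto
      finally have "L \<le> sl u v" by simp
      then show ?thesis using v unfolding sl_def by (simp add: le_divide_eq algebra_simps)
    qed
    have "at 1 within {0..<1} = at_left (1::real)"
      by (rule at_within_nhd[where S="{0<..<2}"]) auto
    moreover have "(G \<longlongrightarrow> G 1) (at 1 within {0..<1})"
      using G_cont unfolding continuous_on_def
      by (meson atLeastAtMost_iff atLeastLessThan_subseteq_atLeastAtMost_iff order_refl
          tendsto_within_subset zero_le_one)
    ultimately have t1: "(G \<longlongrightarrow> G 1) (at_left 1)" by simp
    have t2: "((\<lambda>v. G u + L * (v - u)) \<longlongrightarrow> G u + L * (1 - u)) (at_left 1)"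
      by (intro tendsto_intros)
    have ev: "eventually (\<lambda>v. G u + L * (v - u) \<le> G v) (at_left (1::real))"
      using eventually_at_left_real[of u 1] u by (auto elim!: eventually_mono intro: ineq)
    show ?thesis using tendsto_le[OF _ t1 t2 ev] by simp
  qed
  show ?thesis
  proof (intro exI[of _ "-L"] ballI)
    fix u :: real assume u: "u \<in> {0..1}"
    show "j u \<le> -L * (1 - u)"
    proof (cases "u = 1")
      case True then show ?thesis using j1 by simp
    next
      case False
      then have "G u \<le> -L * (1 - u)" using key[of u] u G1 by auto
      then show ?thesis using G_ge[OF u] by linarith
    qed
  qed
qed

end

context dens begin

lemma Gron0: assumes C: "\<And>x. p x \<le> C * F x" and z: "F z = 0" shows False
proof -
  define h where "h x = F x * exp (- C * x)" for x
  have hd: "DERIV h x :> (p x - C * F x) * exp (- C * x)" for x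
    unfolding h_def by (rule derivative_eq_intros F_deriv refl | simp add: algebra_simps)+
  obtain R where R: "F R > 1/2" using F_above[of "1/2"] by auto
  have Rz: "z \<le> R" using R z F_mono[of R z] by (cases "z \<le> R") auto
  have "h R \<le> h z"
  proof (rule DERIV_nonpos_imp_nonincreasing[OF Rz])
    fix x show "\<exists>y. DERIV h x :> y \<and> y \<le> 0"
      using hd[of x] C[of x] by (intro exI[of _ "(p x - C * F x) * exp (- C * x)"])
        (auto intro: mult_nonpos_nonneg)
  qed
  moreover have "h z = 0" unfolding h_def z by simp
  moreover have "h R > 0" unfolding h_def using R by simp
  ultimately show False by simp
qed

lemma Gron1: assumes C: "\<And>x. p x \<le> C * (1 - F x)" and z: "F z = 1" shows False
proof -
  define h where "h x = (1 - F x) * exp (C * x)" for x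
  have hd: "DERIV h x :> (C * (1 - F x) - p x) * exp (C * x)" for x
    unfolding h_def by (rule derivative_eq_intros F_deriv refl | simp add: algebra_simps)+
  obtain L where L: "F L < 1/2" using F_below[of "1/2"] by auto
  have Lz: "L \<le> z" using L z F_mono[of z L] by (cases "L \<le> z") auto
  have "h L \<le> h z"
  proof (rule DERIV_nonneg_imp_nondecreasing[OF Lz])
    fix x show "\<exists>y. DERIV h x :> y \<and> y \<ge> 0"
      using hd[of x] C[of x] by (intro exI[of _ "(C * (1 - F x) - p x) * exp (C * x)"]) auto
  qed
  moreover have "h z = 0" unfolding h_def z by simp
  moreover have "h L > 0" unfolding h_def using L by simp
  ultimately show False by simp
qed

lemma left_pos: "F z > 0 \<longleftrightarrow> (\<exists>x<z. p x > 0)"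
proof
  assume Fz: "F z > 0"
  obtain L where L: "F L < F z" using F_below[OF Fz] by auto
  have Lz: "L < z" using L F_mono[of z L] by (cases "L < z") auto
  obtain x where x: "L < x" "x < z" "F z - F L = (z - L) * p x"
    using MVT2[OF Lz, of F p] F_deriv by blast
  have "p x > 0" using x L Lz by (metis diff_gt_0_iff_gt zero_less_mult_pos)
  then show "\<exists>x<z. p x > 0" using x by blast
next
  assume "\<exists>x<z. p x > 0"
  then obtain x where x: "x < z" "p x > 0" by blast
  then show "F z > 0" using pos_strict(1)[of x 1] F_nonneg[of "x-1"] F_mono[of x z] by linarith
qed

lemma right_pos: "F z < 1 \<longleftrightarrow> (\<exists>x>z. p x > 0)"
proof
  assume Fz: "F z < 1"
  obtain R where R: "F R > F z" using F_above[OF Fz] by auto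
  have Rz: "z < R" using R F_mono[of R z] by (cases "z < R") auto
  obtain x where x: "z < x" "x < R" "F R - F z = (R - z) * p x"
    using MVT2[OF Rz, of F p] F_deriv by blast
  have "p x > 0" using x R Rz by (metis diff_gt_0_iff_gt zero_less_mult_pos)
  then show "\<exists>x>z. p x > 0" using x by blast
next
  assume "\<exists>x>z. p x > 0"
  then obtain x where x: "z < x" "p x > 0" by blast
  then show "F z < 1" using pos_strict(2)[of x 1] F_le1[of "x+1"] F_mono[of z x] by linarith
qed

lemma supp_iff: "z \<in> supp_int p \<longleftrightarrow> 0 < F z \<and> F z < 1"
  unfolding supp_int_def left_pos right_pos Inf_less_iff less_Sup_iff by auto

lemma main:
  shows "continuous_on {0..1} (Jfun p)
    \<and> continuous_on {0..1} (lcm01 (Jfun p))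
    \<and> (\<forall>z. p z = Jfun p (cdf p z))
    \<and> (\<forall>x y. x \<le> y \<longrightarrow> psi_star p y \<le> psi_star p x)
    \<and> (\<forall>z. continuous (at_right z) (psi_star p))
    \<and> (\<forall>z. (\<bar>psi_star p z\<bar> \<noteq> \<infinity>) \<longleftrightarrow> z \<in> supp_int p)"
proof -
  obtain B where B: "B > 0" "\<forall>x. p x \<le> B" using p_bounded by blast
  interpret M: majo "Jfun p" B
    using J_cont J_nonneg J_bound[of B] B J0 J1 by unfold_locales auto
  define R where "R = right_deriv01 (lcm01 (Jfun p))"
  have R_lt: "R u = M.Dd u" if "0 \<le> u" "u < 1" for u
    unfolding R_def right_deriv01_def using that M.RD by simp
  have R_1: "R 1 = M.Ii" unfolding R_def by (rule M.RD1)
  have psi: "psi_star p z = R (F z)" for z unfolding psi_star_def R_def ..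
  have R_mono: "R u' \<le> R u" if "0 \<le> u" "u \<le> u'" "u' \<le> 1" for u u'
  proof (cases "u' < 1")
    case True then show ?thesis using that R_lt M.Dd_mono by simp
  next
    case False
    then have u': "u' = 1" using that by simp
    show ?thesis
    proof (cases "u < 1")
      case True then show ?thesis using u' R_1 R_lt that M.Ii_le by simp
    next
      case False then have "u = 1" using u' that by simp
      then show ?thesis using u' by simp
    qed
  qed
  have psi_mono: "psi_star p y \<le> psi_star p x" if "x \<le> y" for x y
    unfolding psi by (rule R_mono[OF F_nonneg[of x] F_mono[OF that] F_le1[of y]])
  have psi_rc: "continuous (at_right z) (psi_star p)" for z
    unfolding continuous_within
  proof (cases "F z < 1")
    case False
    then have Fz: "F z = 1" using F_le1[of z] by simp
    have "eventually (\<lambda>w. psi_star p w = psi_star p z) (at_right z)"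
    proof -
      have "eventually (\<lambda>w. w \<in> {z<..<z+1}) (at_right z)" by (rule eventually_at_right_real) simp
      then show ?thesis
      proof eventually_elim
        case (elim w)
        then have "F w = 1" using F_mono[of z w] Fz F_le1[of w] by simp
        then show ?case unfolding psi using Fz by simp
      qed
    qed
    then show "(psi_star p \<longlongrightarrow> psi_star p z) (at_right z)"
      by (rule tendsto_eventually)
  next
    case True
    show "(psi_star p \<longlongrightarrow> psi_star p z) (at_right z)"
    proof (rule order_tendstoI)
      fix y assume y: "y < psi_star p z"
      then have "y < M.Dd (F z)" unfolding psi using R_lt F_nonneg True by simp
      then obtain \<delta> where d: "\<delta> > 0" "\<And>u. F z \<le> u \<and> u < F z + \<delta> \<Longrightarrow> y < M.Dd u"
        using M.Dd_rc[of "F z" y] F_nonneg True by blast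
      have "(F \<longlongrightarrow> F z) (at_right z)"
        using F_isCont by (simp add: isCont_def filterlim_at_split)
      then have e1: "eventually (\<lambda>w. F w < min (F z + \<delta>) 1) (at_right z)"
        using d True by (intro order_tendstoD) auto
      have e2: "eventually (\<lambda>w. w \<in> {z<..<z+1}) (at_right z)" by (rule eventually_at_right_real) simp
      show "eventually (\<lambda>w. y < psi_star p w) (at_right z)"
        using e1 e2
      proof eventually_elim
        case (elim w)
        then have "F z \<le> F w" using F_mono by simp
        then show ?case unfolding psi using elim d(2)[of "F w"] R_lt[of "F w"] F_nonneg[of z] by simp
      qed
    next
      fix y assume y: "psi_star p z < y"
      have e2: "eventually (\<lambda>w. w \<in> {z<..<z+1}) (at_right z)" by (rule eventually_at_right_real) simp
      then show "eventually (\<lambda>w. psi_star p w < y) (at_right z)"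
      proof eventually_elim
        case (elim w)
        then have "psi_star p w \<le> psi_star p z" using psi_mono[of z w] by simp
        then show ?case using y by (rule le_less_trans)
      qed
    qed
  qed
  have psi_fin: "(\<bar>psi_star p z\<bar> \<noteq> \<infinity>) \<longleftrightarrow> z \<in> supp_int p" for z
  proof -
    consider "F z = 0" | "F z = 1" | "0 < F z" "F z < 1"
      using F_nonneg[of z] F_le1[of z] by fastforce
    then show ?thesis
    proof cases
      case 1
      have "M.Dd 0 = \<infinity>"
      proof (rule ccontr)
        assume "M.Dd 0 \<noteq> \<infinity>"
        then obtain C where C: "\<forall>u\<in>{0..1}. Jfun p u \<le> C * u" using M.D0_fin by blast
        have "p x \<le> C * F x" for x using C[rule_format, of "F x"] pJF[of x] F_nonneg[of x] F_le1[of x] by simp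
        then show False using Gron0 1 by blast
      qed
      then show ?thesis unfolding psi using 1 R_lt[of 0] supp_iff by simp
    next
      case 2
      have "M.Ii = -\<infinity>"
      proof (rule ccontr)
        assume "M.Ii \<noteq> -\<infinity>"
        then obtain C where C: "\<forall>u\<in>{0..1}. Jfun p u \<le> C * (1 - u)" using M.D1_fin by blast
        have "p x \<le> C * (1 - F x)" for x using C[rule_format, of "F x"] pJF[of x] F_nonneg[of x] F_le1[of x] by simp
        then show False using Gron1 2 by blast
      qed
      then show ?thesis unfolding psi using 2 R_1 supp_iff by simp
    next
      case 3
      then show ?thesis unfolding psi using R_lt[of "F z"] M.Dd_fin[of "F z"] supp_iff by simp
    qed
  qed
  show ?thesis using J_cont M.G_cont pJF psi_mono psi_rc psi_fin by blast
qed

end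

theorem lemma2p1:
  fixes p :: "real \<Rightarrow> real"
  assumes nonneg: "\<And>x. p x \<ge> 0"
    and integrable: "p integrable_on UNIV"
    and total: "integral UNIV p = 1"
    and unif: "uniformly_continuous_on UNIV p"
  shows "continuous_on {0..1} (Jfun p)
    \<and> continuous_on {0..1} (lcm01 (Jfun p))
    \<and> (\<forall>z. p z = Jfun p (cdf p z))
    \<and> (\<forall>x y. x \<le> y \<longrightarrow> psi_star p y \<le> psi_star p x)
    \<and> (\<forall>z. continuous (at_right z) (psi_star p))
    \<and> (\<forall>z. (\<bar>psi_star p z\<bar> \<noteq> \<infinity>) \<longleftrightarrow> z \<in> supp_int p)"
proof -
  interpret dens p using assms by unfold_locales auto
  show ?thesis by (rule main)
qed

end
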